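(* Let $g$ be a nondegenerate symmetric bilinear form on $\mathbb{R}^n$, $P\subset\mathbb{R}^n$ a subspace, $R:[0,1]\to\mathcal L(\mathbb{R}^n)$ continuous, and $Y:[0,1]\to\mathbb{R}^n$ a solution of $Y''=RY$ with $g(Y,Y)<0$ on $[0,1]$. For every $t\in[0,1]$, the restriction of $F_t$ to $\hat{\mathcal S}_t$ is surjective onto $\widetilde{\mathcal H}$.
   Context: $\mathcal H=\{\hat V\in H^1([0,1],\mathbb{R}^n):\hat V(0)\in P,\hat V(1)=0\}$; $\widetilde{\mathcal H}=L^2([0,1],\mathbb{R})/\mathfrak C$, where $\mathfrak C$ is the subspace of constant functions. $\hat Y_t(u)=Y(tu)$. $F_t:\mathcal H\to\widetilde{\mathcal H}$, $F_t(\hat V)(u)=g(\hat V'(u),Y(tu))-t\,g(\hat V(u),Y'(tu))+\mathfrak C$. $\hat{\mathcal S}_t=\{\hat f\,\hat Y_t:\hat f\in H^1_0([0,1],\mathbb{R})\}$, where $H^1_0([0,1],\mathbb{R})$ is the space of $H^1$ functions vanishing at $0$ and $1$. *)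

theory Defs
  imports "HOL-Analysis.Analysis"
begin

text \<open>Square-integrable functions on [0,1] (as functions, L^2 classes are handled by
  stating equalities almost everywhere).\<close>
definition L2_01 :: "(real \<Rightarrow> 'a::euclidean_space) \<Rightarrow> bool" where
  "L2_01 f \<longleftrightarrow> f measurable_on {0..1} \<and> (\<lambda>u. norm (f u) ^ 2) integrable_on {0..1}"

text \<open>V' is a weak derivative of V on [0,1]: V' is L^2 and V is its primitive
  (so V is the absolutely continuous H^1 representative).\<close>
definition has_weak_deriv_01 :: "(real \<Rightarrow> 'a::euclidean_space) \<Rightarrow> (real \<Rightarrow> 'a) \<Rightarrow> bool" where
  "has_weak_deriv_01 V V' \<longleftrightarrow> L2_01 V' \<and> (\<forall>u\<in>{0..1}. V u = V 0 + integral {0..u} V')"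

definition H1_01 :: "(real \<Rightarrow> 'a::euclidean_space) \<Rightarrow> bool" where
  "H1_01 V \<longleftrightarrow> (\<exists>V'. has_weak_deriv_01 V V')"

definition H1_0_01 :: "(real \<Rightarrow> real) \<Rightarrow> bool" where
  "H1_0_01 f \<longleftrightarrow> H1_01 f \<and> f 0 = 0 \<and> f 1 = 0"

definition S_hat :: "(real \<Rightarrow> 'a::euclidean_space) \<Rightarrow> real \<Rightarrow> (real \<Rightarrow> 'a) set" where
  "S_hat Y t = {(\<lambda>u. f u *\<^sub>R Y (t * u)) | f. H1_0_01 f}"

text \<open>A representative of F_t(V) (before passing to the quotient by constants),
  computed from V and (a representative of) its weak derivative V'.\<close>
definition F_rep :: "('a \<Rightarrow> 'a \<Rightarrow> real) \<Rightarrow> (real \<Rightarrow> 'a) \<Rightarrow> (real \<Rightarrow> 'a) \<Rightarrow> real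
      \<Rightarrow> (real \<Rightarrow> 'a) \<Rightarrow> (real \<Rightarrow> 'a) \<Rightarrow> real \<Rightarrow> real" where
  "F_rep g Y Y' t V V' u = g (V' u) (Y (t * u)) - t * g (V u) (Y' (t * u))"

end

theory Submission
  imports Defs
begin


lemma prod_rule:
  fixes h :: "real \<Rightarrow> real" and Z Z' :: "real \<Rightarrow> 'a::euclidean_space" and u :: real
  assumes hb[measurable]: "h \<in> borel_measurable borel"
    and hi: "integrable lborel (\<lambda>x. indicator {0..1} x * h x)"
    and Zb[measurable]: "Z \<in> borel_measurable borel" and Z'b[measurable]: "Z' \<in> borel_measurable borel"
    and Zc: "continuous_on {0..1} Z" and Z'c: "continuous_on {0..1} Z'"
    and Zd: "\<And>s. s \<in> {0..1} \<Longrightarrow> (Z has_vector_derivative Z' s) (at s within {0..1})"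
    and u0: "0 \<le> u" and u1: "u \<le> 1"
  shows "((\<lambda>s. h s *\<^sub>R Z s + integral {0..s} h *\<^sub>R Z' s) has_integral (integral {0..u} h *\<^sub>R Z u)) {0..u}"
proof -
  obtain B1 where B1: "B1 > 0" "\<And>s. s \<in> {0..1} \<Longrightarrow> norm (Z s) \<le> B1"
    using compact_continuous_image[OF Zc] compact_imp_bounded bounded_pos
    by (metis compact_Icc image_eqI)
  obtain B2 where B2: "B2 > 0" "\<And>s. s \<in> {0..1} \<Longrightarrow> norm (Z' s) \<le> B2"
    using compact_continuous_image[OF Z'c] compact_imp_bounded bounded_pos
    by (metis compact_Icc image_eqI)
  have hsub: "set_integrable lborel {a..b} h" if "0 \<le> a" "b \<le> 1" for a b
  proof (rule set_integrable_subset[of _ "{0..1}"])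
    show "set_integrable lborel {0..1} h" using hi by (simp add: set_integrable_def)
  qed (use that in auto)
  have Hs: "integral {0..s} h = (LINT r:{0..s}|lborel. h r)" if "0 \<le> s" "s \<le> 1" for s
    using set_borel_integral_eq_integral(2)[OF hsub[of 0 s]] that by simp
  have ind01: "integrable lborel (indicat_real {0..1::real})"
    using borel_integrable_compact[of "{0..1::real}" "\<lambda>_. 1::real"] by simp
  define k where "k r s = (if 0 \<le> r \<and> r \<le> s \<and> s \<le> u then h r else 0) *\<^sub>R Z' s" for r s
  have km[measurable]: "(\<lambda>(r, s). k r s) \<in> borel_measurable (lborel \<Otimes>\<^sub>M lborel)"
    unfolding k_def by measurable
  have kbound: "norm (k r s) \<le> indicator {0..1} s * (indicator {0..1} r * \<bar>h r\<bar> * B2)" for r s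
  proof (cases "0 \<le> r \<and> r \<le> s \<and> s \<le> u")
    case True
    then have "norm (Z' s) \<le> B2" using B2 u1 by auto
    then have "\<bar>h r\<bar> * norm (Z' s) \<le> \<bar>h r\<bar> * B2" by (simp add: mult_left_mono)
    then show ?thesis using True u1 by (simp add: k_def indicator_def)
  next
    case False
    then have "k r s = 0" by (auto simp add: k_def)
    then show ?thesis using B2 by (simp add: indicator_def)
  qed
  have kr_int: "integrable lborel (k r)" for r
  proof (rule Bochner_Integration.integrable_bound)
    show "integrable lborel (\<lambda>s::real. indicator {0..1} s * (indicator {0..1} r * \<bar>h r\<bar> * B2))"
      using ind01 by (intro integrable_mult_left) simp
    show "k r \<in> borel_measurable lborel" unfolding k_def by measurable
    show "AE s in lborel. norm (k r s) \<le> norm (indicator {0..1} s * (indicator {0..1} r * \<bar>h r\<bar> * B2))"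
    proof (intro AE_I2)
      fix s :: real
      have "0 \<le> indicator {0..1} s * (indicator {0..1} r * \<bar>h r\<bar> * B2)"
        using B2 by simp
      then show "norm (k r s) \<le> norm (indicator {0..1} s * (indicator {0..1} r * \<bar>h r\<bar> * B2))"
        using kbound[of r s] by simp
    qed
  qed
  have kint: "integrable (lborel \<Otimes>\<^sub>M lborel) (\<lambda>(r, s). k r s)"
  proof (rule lborel_pair.Fubini_integrable)
    show "(\<lambda>(r, s). k r s) \<in> borel_measurable (lborel \<Otimes>\<^sub>M lborel)" by (rule km)
    show "AE r in lborel. integrable lborel (\<lambda>s. case (r, s) of (r, s) \<Rightarrow> k r s)"
      using kr_int by simp
    show "integrable lborel (\<lambda>r. LINT s|lborel. norm (case (r, s) of (r, s) \<Rightarrow> k r s))"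
    proof (rule Bochner_Integration.integrable_bound)
      show "integrable lborel (\<lambda>r. indicator {0..1} r * h r * B2)"
        using hi by (intro integrable_mult_left integrable_mult_right) (simp add: mult.assoc)
      show "(\<lambda>r. LINT s|lborel. norm (case (r, s) of (r, s) \<Rightarrow> k r s)) \<in> borel_measurable lborel"
        by measurable
      have "norm (LINT s|lborel. norm (k r s)) \<le> norm (indicator {0..1} r * h r * B2)" for r
      proof -
        have "norm (LINT s|lborel. norm (k r s)) = (LINT s|lborel. norm (k r s))"
          by simp
        also have "\<dots> \<le> (LINT s::real|lborel. indicator {0..1} s * (indicator {0..1} r * \<bar>h r\<bar> * B2))"
        proof (rule integral_mono')
          show "integrable lborel (\<lambda>s::real. indicator {0..1} s * (indicator {0..1} r * \<bar>h r\<bar> * B2))"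
            using ind01 by (intro integrable_mult_left) simp
        qed (use kbound B2 in \<open>auto simp: indicator_def\<close>)
        also have "\<dots> = indicator {0..1} r * \<bar>h r\<bar> * B2"
          by simp
        also have "\<dots> = norm (indicator {0..1} r * h r * B2)"
          using B2 by (simp add: abs_mult indicator_def)
        finally show ?thesis .
      qed
      then show "AE r in lborel. norm (LINT s|lborel. norm (case (r, s) of (r, s) \<Rightarrow> k r s)) \<le> norm (indicator {0..1} r * h r * B2)"
        by simp
    qed
  qed
  have fub: "(\<integral>s. (\<integral>r. k r s \<partial>lborel) \<partial>lborel) = (\<integral>r. (\<integral>s. k r s \<partial>lborel) \<partial>lborel)"
    by (rule lborel_pair.Fubini_integral[OF kint])
  have LHSin: "(\<integral>r. k r s \<partial>lborel) = indicator {0..u} s *\<^sub>R (integral {0..s} h *\<^sub>R Z' s)" for s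
  proof (cases "0 \<le> s \<and> s \<le> u")
    case True
    have "(\<lambda>r. k r s) = (\<lambda>r. (indicator {0..s} r *\<^sub>R h r) *\<^sub>R Z' s)"
      using True by (auto simp: k_def indicator_def fun_eq_iff)
    moreover have "integrable lborel (\<lambda>r. indicator {0..s} r *\<^sub>R h r)"
      using hsub[of 0 s] True u1 by (simp add: set_integrable_def)
    ultimately have "(\<integral>r. k r s \<partial>lborel) = (LINT r:{0..s}|lborel. h r) *\<^sub>R Z' s"
      by (simp add: set_lebesgue_integral_def)
    then show ?thesis using True Hs[of s] u1 by (simp add: indicator_def)
  next
    case False
    then have "(\<lambda>r. k r s) = (\<lambda>r. 0)" by (auto simp: k_def fun_eq_iff)
    then show ?thesis using False by (simp add: indicator_def)
  qed
  have RHSin: "(\<integral>s. k r s \<partial>lborel) = indicator {0..u} r *\<^sub>R (h r *\<^sub>R (Z u - Z r))" for r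
  proof (cases "0 \<le> r \<and> r \<le> u")
    case True
    have kr: "k r = (\<lambda>s. h r *\<^sub>R (indicator {r..u} s *\<^sub>R Z' s))"
      using True by (auto simp: k_def indicator_def fun_eq_iff)
    have "(\<integral>s. indicator {r..u} s *\<^sub>R Z' s \<partial>lborel) = Z u - Z r"
    proof -
      have cont: "continuous_on {r..u} Z'"
        using Z'c True u1 by (rule_tac continuous_on_subset) auto
      have si: "set_integrable lborel {r..u} Z'"
        using borel_integrable_compact[OF compact_Icc cont] by (simp add: set_integrable_def)
      have "(Z' has_integral (Z u - Z r)) {r..u}"
      proof (rule fundamental_theorem_of_calculus)
        show "r \<le> u" using True by simp
        show "(Z has_vector_derivative Z' x) (at x within {r..u})" if "x \<in> {r..u}" for x
          using Zd[of x] that True u1 by (rule_tac has_vector_derivative_within_subset) auto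
      qed
      then show ?thesis using set_borel_integral_eq_integral(2)[OF si]
        by (simp add: set_lebesgue_integral_def integral_unique)
    qed
    moreover have "(\<integral>s. k r s \<partial>lborel) = h r *\<^sub>R (\<integral>s. indicator {r..u} s *\<^sub>R Z' s \<partial>lborel)"
      by (simp only: kr integral_scaleR_right)
    ultimately show ?thesis using True by (simp add: indicator_def)
  next
    case False
    then have "(\<lambda>s. k r s) = (\<lambda>s. 0)" by (auto simp: k_def fun_eq_iff)
    then show ?thesis using False by (simp add: indicator_def)
  qed
  have i3: "set_integrable lborel {0..u} h" using hsub[of 0 u] u1 by simp
  have i1: "set_integrable lborel {0..u} (\<lambda>s. h s *\<^sub>R Z s)"
    unfolding set_integrable_def
  proof (rule Bochner_Integration.integrable_bound)
    show "integrable lborel (\<lambda>x. indicator {0..1} x * h x * B1)"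
      using hi by (intro integrable_mult_left) simp
    show "(\<lambda>x. indicator {0..u} x *\<^sub>R (h x *\<^sub>R Z x)) \<in> borel_measurable lborel" by measurable
    have "norm (indicator {0..u} x *\<^sub>R (h x *\<^sub>R Z x)) \<le> norm (indicator {0..1} x * h x * B1)" for x
    proof (cases "0 \<le> x \<and> x \<le> u")
      case True
      then have "norm (Z x) \<le> B1" using B1 u1 by auto
      then have "\<bar>h x\<bar> * norm (Z x) \<le> \<bar>h x\<bar> * B1" by (simp add: mult_left_mono)
      then show ?thesis using True u1 B1 by (simp add: indicator_def abs_mult)
    qed (auto simp add: indicator_def)
    then show "AE x in lborel. norm (indicator {0..u} x *\<^sub>R (h x *\<^sub>R Z x)) \<le> norm (indicator {0..1} x * h x * B1)"
      by simp
  qed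
  have i2: "set_integrable lborel {0..u} (\<lambda>s. integral {0..s} h *\<^sub>R Z' s)"
  proof -
    have "continuous_on {0..u} (\<lambda>s. integral {0..s} h *\<^sub>R Z' s)"
    proof (intro continuous_on_scaleR)
      show "continuous_on {0..u} (\<lambda>s. integral {0..s} h)"
        using set_borel_integral_eq_integral(1)[OF i3] by (rule indefinite_integral_continuous_1)
      show "continuous_on {0..u} Z'" using Z'c u1 by (rule_tac continuous_on_subset) auto
    qed
    then show ?thesis
      unfolding set_integrable_def by (rule borel_integrable_compact[OF compact_Icc])
  qed
  have eq: "(LINT s:{0..u}|lborel. integral {0..s} h *\<^sub>R Z' s) = (LINT r:{0..u}|lborel. h r *\<^sub>R (Z u - Z r))"
    using fub LHSin RHSin by (simp add: set_lebesgue_integral_def)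
  have "(\<lambda>r. indicator {0..u} r *\<^sub>R (h r *\<^sub>R (Z u - Z r))) = (\<lambda>r. (indicator {0..u} r *\<^sub>R h r) *\<^sub>R Z u - indicator {0..u} r *\<^sub>R (h r *\<^sub>R Z r))"
    by (auto simp: fun_eq_iff algebra_simps)
  then have eq2: "(LINT r:{0..u}|lborel. h r *\<^sub>R (Z u - Z r)) = (LINT r:{0..u}|lborel. h r) *\<^sub>R Z u - (LINT r:{0..u}|lborel. h r *\<^sub>R Z r)"
    using i1 i3 unfolding set_lebesgue_integral_def set_integrable_def
    by (simp add: integral_diff)
  have hs1: "((\<lambda>s. h s *\<^sub>R Z s) has_integral (LINT r:{0..u}|lborel. h r *\<^sub>R Z r)) {0..u}"
    using set_borel_integral_eq_integral[OF i1] by (metis has_integral_integral)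
  have hs2: "((\<lambda>s. integral {0..s} h *\<^sub>R Z' s) has_integral (LINT s:{0..u}|lborel. integral {0..s} h *\<^sub>R Z' s)) {0..u}"
    using set_borel_integral_eq_integral[OF i2] by (metis has_integral_integral)
  have "(LINT r:{0..u}|lborel. h r *\<^sub>R Z r) + (LINT s:{0..u}|lborel. integral {0..s} h *\<^sub>R Z' s) = integral {0..u} h *\<^sub>R Z u"
    using eq eq2 Hs[of u] u0 u1 by simp
  then show ?thesis using has_integral_add[OF hs1 hs2] by simp
qed


lemma borel_lebesgue_on:
  fixes f :: "'a::euclidean_space \<Rightarrow> 'b::euclidean_space"
  assumes "f \<in> borel_measurable borel"
  shows "f \<in> borel_measurable (lebesgue_on S)"
proof -
  have "f \<in> borel_measurable lebesgue"
    using assms by (simp add: measurable_completion)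
  then show ?thesis by (rule measurable_restrict_space1)
qed

lemma cont_deriv:
  assumes "\<And>s. s \<in> S \<Longrightarrow> (f has_vector_derivative f' s) (at s within S)"
  shows "continuous_on S f"
  using assms has_vector_derivative_continuous continuous_on_eq_continuous_within by blast

lemma abs_le_sq: "\<bar>x::real\<bar> \<le> 1 + x^2"
proof (cases "\<bar>x\<bar> \<le> 1")
  case False
  then have "\<bar>x\<bar> * 1 \<le> \<bar>x\<bar> * \<bar>x\<bar>" by (intro mult_left_mono) auto
  then show ?thesis by (simp add: power2_eq_square abs_mult_self_eq)
next
  case True
  have "0 \<le> x^2" by simp
  then show ?thesis using True by linarith
qed


lemma sq_bound:
  fixes x a b :: real
  assumes "0 \<le> x" "x \<le> a + b"
  shows "x^2 \<le> 2 * a^2 + 2 * b^2"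
proof -
  have "x^2 \<le> (a + b)^2" using assms by (intro power_mono) auto
  also have "\<dots> \<le> 2 * a^2 + 2 * b^2"
    using zero_le_power2[of "a - b"] by (simp add: power2_eq_square algebra_simps)
  finally show ?thesis .
qed



theorem lemma4p4:
  fixes g :: "real^'n \<Rightarrow> real^'n \<Rightarrow> real"
    and P :: "(real^'n) set"
    and R :: "real \<Rightarrow> real^'n^'n"
    and Y Y' :: "real \<Rightarrow> real^'n"
    and t :: real
  assumes g_bilinear: "bilinear g"
    and g_sym: "\<And>x y. g x y = g y x"
    and g_nondeg: "\<And>x. (\<forall>y. g x y = 0) \<Longrightarrow> x = 0"
    and P_subspace: "subspace P"
    and R_cont: "continuous_on {0..1} R"
    and Y_deriv: "\<And>s. s \<in> {0..1} \<Longrightarrow> (Y has_vector_derivative Y' s) (at s within {0..1})"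
    and Y'_deriv: "\<And>s. s \<in> {0..1} \<Longrightarrow> (Y' has_vector_derivative (R s *v Y s)) (at s within {0..1})"
    and Y_timelike: "\<And>s. s \<in> {0..1} \<Longrightarrow> g (Y s) (Y s) < 0"
    and t_in: "t \<in> {0..1}"
  shows "\<forall>\<phi> :: real \<Rightarrow> real. L2_01 \<phi> \<longrightarrow>
           (\<exists>V\<in>S_hat Y t. \<exists>V'. has_weak_deriv_01 V V' \<and>
              (\<exists>c::real. \<exists>N. negligible N \<and>
                 (\<forall>u\<in>{0..1} - N. F_rep g Y Y' t V V' u = \<phi> u + c)))"
proof (intro allI impI)
  fix \<phi> :: "real \<Rightarrow> real"
  assume "L2_01 \<phi>"
  then have phim: "\<phi> measurable_on {0..1}" and phi2: "(\<lambda>u. (\<phi> u)^2) integrable_on {0..1}"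
    by (auto simp: L2_01_def)
  have t0: "0 \<le> t" and t1: "t \<le> 1" using t_in by auto
  have tu: "t * u \<in> {0..1}" if "u \<in> {0..1}" for u
    using that t0 t1 by (auto intro: mult_le_one)
  have Yc: "continuous_on {0..1} Y" using Y_deriv by (rule cont_deriv)
  have Y'c: "continuous_on {0..1} Y'" using Y'_deriv by (rule cont_deriv)
  define y where "y u = Y (t * u)" for u
  define y' where "y' u = t *\<^sub>R Y' (t * u)" for u
  have yc: "continuous_on {0..1} y"
    unfolding y_def by (rule continuous_on_compose2[OF Yc]) (auto intro!: continuous_intros tu)
  have y'c: "continuous_on {0..1} y'"
    unfolding y'_def by (intro continuous_intros continuous_on_compose2[OF Y'c]) (auto intro!: continuous_intros tu)
  have yd: "(y has_vector_derivative y' s) (at s within {0..1})" if "s \<in> {0..1}" for s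
  proof -
    have "((\<lambda>u. t * u) has_vector_derivative t) (at s within {0..1})"
      by (auto intro!: derivative_eq_intros simp: has_real_derivative_iff_has_vector_derivative[symmetric])
    moreover have "(Y has_vector_derivative Y' (t * s)) (at (t * s) within (\<lambda>u. t * u) ` {0..1})"
      by (rule has_vector_derivative_within_subset[OF Y_deriv[OF tu[OF that]]]) (auto intro: tu)
    ultimately have "(Y \<circ> (\<lambda>u. t * u) has_vector_derivative t *\<^sub>R Y' (t * s)) (at s within {0..1})"
      by (rule vector_diff_chain_within)
    then show ?thesis by (simp add: y_def[abs_def] y'_def o_def)
  qed
  define q where "q u = g (y u) (y u)" for u
  have qc: "continuous_on {0..1} q"
    unfolding q_def using yc g_bilinear by (rule bilinear_continuous_on_compose[OF yc])
  have qneg: "q u < 0" if "u \<in> {0..1}" for u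
    unfolding q_def y_def using Y_timelike[OF tu[OF that]] .
  obtain u0 where u0: "u0 \<in> {0..1}" "\<And>u. u \<in> {0..1} \<Longrightarrow> q u \<le> q u0"
    using continuous_attains_sup[OF compact_Icc _ qc] by auto
  define m where "m = - q u0"
  have m0: "m > 0" using qneg[OF u0(1)] by (simp add: m_def)
  have qm: "q u \<le> - m" if "u \<in> {0..1}" for u using u0(2)[OF that] by (simp add: m_def)
  obtain Bq where Bq: "Bq > 0" "\<And>u. u \<in> {0..1} \<Longrightarrow> \<bar>q u\<bar> \<le> Bq"
    using compact_continuous_image[OF qc] compact_imp_bounded bounded_pos
    by (metis compact_Icc image_eqI real_norm_def)
  have phiabs: "\<phi> absolutely_integrable_on {0..1}"
  proof (rule measurable_bounded_by_integrable_imp_absolutely_integrable)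
    show "\<phi> \<in> borel_measurable (lebesgue_on {0..1})"
      using phim by (rule measurable_on_imp_borel_measurable_lebesgue) simp
    show "(\<lambda>u. 1 + (\<phi> u)^2) integrable_on {0..1}"
      using phi2 by (intro integrable_add) auto
    show "norm (\<phi> x) \<le> 1 + (\<phi> x)^2" for x using abs_le_sq by simp
  qed simp
  define \<phi>0 where "\<phi>0 x = indicator {0..1} x * \<phi> x" for x
  have phi0i: "integrable lebesgue \<phi>0"
    using phiabs by (simp add: set_integrable_def \<phi>0_def[abs_def])
  then have "\<phi>0 \<in> borel_measurable (completion lborel)" by auto
  then obtain \<psi> where psib: "\<psi> \<in> borel_measurable lborel" and psiae: "AE x in lborel. \<phi>0 x = \<psi> x"
    using completion_ex_borel_measurable_real by blast
  have psib'[measurable]: "\<psi> \<in> borel_measurable borel" using psib by simp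
  obtain N where N: "{x \<in> space lborel. \<not> \<phi>0 x = \<psi> x} \<subseteq> N" "N \<in> null_sets lborel"
    using psiae unfolding eventually_ae_filter by metis
  have negN: "negligible N"
    using N(2) by (simp add: negligible_iff_null_sets null_sets_completionI)
  have psiphi: "\<psi> x = \<phi> x" if "x \<in> {0..1} - N" for x
  proof -
    have "\<phi>0 x = \<psi> x" using N(1) that by auto
    then show ?thesis using that by (simp add: \<phi>0_def)
  qed
  have psii: "integrable lborel \<psi>"
  proof -
    have "integrable lebesgue \<psi>"
      using phi0i by (rule integrable_cong_AE_imp) (use psiae psib in \<open>auto intro!: AE_completion measurable_completion\<close>)
    then show ?thesis using integrable_completion[of \<psi> lborel] psib by simp
  qed
  define \<rho> where "\<rho> u = indicator {0..1} u *\<^sub>R (1 / q u)" for u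
  have rhoc: "continuous_on {0..1} (\<lambda>u. 1 / q u)"
    using qc qneg by (intro continuous_on_divide continuous_on_const) force+
  have rhob[measurable]: "\<rho> \<in> borel_measurable borel"
    unfolding \<rho>_def[abs_def] by (rule borel_measurable_continuous_on_indicator) (simp_all add: rhoc)
  have rho_bd: "\<bar>\<rho> u\<bar> \<le> 1 / m" for u
  proof (cases "u \<in> {0..1}")
    case True
    have "m \<le> \<bar>q u\<bar>" using qm[OF True] by linarith
    then have "1 / \<bar>q u\<bar> \<le> 1 / m" using m0 by (intro divide_left_mono) auto
    then show ?thesis using True by (simp add: \<rho>_def)
  next
    case False
    then show ?thesis using m0 by (simp add: \<rho>_def)
  qed
  have rho_le: "\<rho> u \<le> - 1 / Bq" if "u \<in> {0..1}" for u
  proof -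
    have "0 < - q u" "- q u \<le> Bq" using qneg[OF that] Bq(2)[OF that] by auto
    then have "inverse Bq \<le> inverse (- q u)" by (intro le_imp_inverse_le)
    then show ?thesis using that by (simp add: \<rho>_def divide_inverse)
  qed
  define kk where "kk c u = \<rho> u * (\<psi> u + c)" for c u
  have kkb[measurable]: "kk c \<in> borel_measurable borel" for c
    unfolding kk_def[abs_def] by measurable
  have ind01: "integrable lborel (indicat_real {0..1::real})"
    using borel_integrable_compact[of "{0..1::real}" "\<lambda>_. 1::real"] by simp
  have kki: "integrable lborel (\<lambda>x. indicator {0..1} x * kk c x)" for c
  proof (rule Bochner_Integration.integrable_bound)
    show "integrable lborel (\<lambda>x. 1 / m * (\<bar>\<psi> x\<bar> + \<bar>c\<bar> * indicator {0..1} x))"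
      using psii ind01 by (intro integrable_mult_right integrable_add integrable_abs) auto
    show "(\<lambda>x. indicator {0..1} x * kk c x) \<in> borel_measurable lborel" by measurable
    have "norm (indicator {0..1} x * kk c x) \<le> norm (1 / m * (\<bar>\<psi> x\<bar> + \<bar>c\<bar> * indicator {0..1} x))" for x
    proof (cases "x \<in> {0..1}")
      case True
      have "\<bar>\<rho> x * (\<psi> x + c)\<bar> \<le> 1 / m * (\<bar>\<psi> x\<bar> + \<bar>c\<bar>)"
        unfolding abs_mult by (rule mult_mono[OF rho_bd abs_triangle_ineq]) (use m0 in auto)
      then show ?thesis using True m0 by (simp add: kk_def)
    qed (auto simp add: indicator_def)
    then show "AE x in lborel. norm (indicator {0..1} x * kk c x) \<le> norm (1 / m * (\<bar>\<psi> x\<bar> + \<bar>c\<bar> * indicator {0..1} x))"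
      by simp
  qed
  have kkI: "kk c integrable_on {0..1}" for c
    using set_borel_integral_eq_integral(1)[of "{0..1}" "kk c"] kki[of c] by (simp add: set_integrable_def)
  have kk_lin: "kk c u = kk 0 u + c * \<rho> u" for c u
    by (simp add: kk_def algebra_simps)
  have rhoI: "\<rho> integrable_on {0..1}"
  proof -
    have "(\<lambda>u. kk 1 u - kk 0 u) integrable_on {0..1}" using kkI by (intro integrable_diff)
    moreover have "(\<lambda>u. kk 1 u - kk 0 u) = \<rho>" by (simp add: kk_lin[of 1] fun_eq_iff)
    ultimately show ?thesis by simp
  qed
  define I\<rho> where "I\<rho> = integral {0..1} \<rho>"
  have Irho: "I\<rho> < 0"
  proof -
    have "I\<rho> \<le> integral {0..1} (\<lambda>_::real. - 1 / Bq)"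
      unfolding I\<rho>_def by (rule integral_le[OF rhoI integrable_const_ivl]) (metis rho_le minus_divide_left)
    also have "\<dots> = - 1 / Bq" by simp
    moreover have "- 1 / Bq < 0" using Bq(1) by simp
    ultimately show ?thesis by linarith
  qed
  define c where "c = - integral {0..1} (kk 0) / I\<rho>"
  define k where "k = kk c"
  have kb[measurable]: "k \<in> borel_measurable borel" unfolding k_def by simp
  have k_int01: "integral {0..1} k = 0"
  proof -
    have "integral {0..1} k = integral {0..1} (\<lambda>u. kk 0 u + c * \<rho> u)"
    proof -
      have "kk c = (\<lambda>u. kk 0 u + c * \<rho> u)" by (rule ext) (rule kk_lin)
      then show ?thesis unfolding k_def by simp
    qed
    also have "\<dots> = integral {0..1} (kk 0) + c * I\<rho>"
    proof -
      have "(\<lambda>u. c * \<rho> u) integrable_on {0..1}" using integrable_on_cmult_left[OF rhoI, of c] by simp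
      then have "integral {0..1} (\<lambda>u. kk 0 u + c * \<rho> u) = integral {0..1} (kk 0) + integral {0..1} (\<lambda>u. c * \<rho> u)"
        using kkI[of 0] by (rule_tac integral_add) auto
      then show ?thesis by (simp add: I\<rho>_def)
    qed
    also have "\<dots> = 0" using Irho by (simp add: c_def)
    finally show ?thesis .
  qed
  define f where "f u = integral {0..u} k" for u
  show "\<exists>V\<in>S_hat Y t. \<exists>V'. has_weak_deriv_01 V V' \<and>
              (\<exists>c::real. \<exists>N. negligible N \<and>
                 (\<forall>u\<in>{0..1} - N. F_rep g Y Y' t V V' u = \<phi> u + c))"
  proof -
  have kI: "k integrable_on {0..1}" unfolding k_def by (rule kkI)
  have hi: "integrable lborel (\<lambda>x. indicator {0..1} x * k x)" unfolding k_def by (rule kki)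
  have kmeas: "k measurable_on {0..1}"
    by (rule measurable_on_iff_borel_measurable[THEN iffD2]) (simp_all add: borel_lebesgue_on)
  have fc: "continuous_on {0..1} f" unfolding f_def[abs_def] using kI by (rule indefinite_integral_continuous_1)
  have f0: "f 0 = 0" by (simp add: f_def)
  have f1: "f 1 = 0" using k_int01 by (simp add: f_def)
  have psi2: "(\<lambda>u. (\<psi> u)^2) integrable_on {0..1}"
    by (rule integrable_spike[OF phi2 negN]) (simp add: psiphi)
  have k_sq: "(\<lambda>u. norm (k u)^2) integrable_on {0..1}"
  proof (rule measurable_bounded_by_integrable_imp_integrable)
    show "(\<lambda>u. norm (k u)^2) \<in> borel_measurable (lebesgue_on {0..1})"
      by (rule borel_lebesgue_on) measurable
    show "(\<lambda>u. (2/m^2) * (\<psi> u)^2 + 2/m^2*c^2) integrable_on {0..1}"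
      using integrable_add[OF integrable_on_cmult_left[OF psi2, of "2/m^2"] integrable_const_ivl[of "2/m^2*c^2" 0 1]]
      by simp
    show "norm (norm (k u)^2) \<le> (2/m^2) * (\<psi> u)^2 + 2/m^2*c^2" if "u \<in> {0..1}" for u
    proof -
      have "(\<rho> u)^2 \<le> (1/m)^2"
        using rho_bd[of u] by (metis abs_ge_zero power2_abs power_mono)
      moreover have "(\<psi> u + c)^2 \<le> 2 * (\<psi> u)^2 + 2 * c^2"
        using sq_bound[of "\<bar>\<psi> u + c\<bar>" "\<bar>\<psi> u\<bar>" "\<bar>c\<bar>"] by simp
      ultimately have "(\<rho> u)^2 * (\<psi> u + c)^2 \<le> (1/m)^2 * (2 * (\<psi> u)^2 + 2 * c^2)"
        by (rule mult_mono) auto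
      moreover have "(k u)^2 = (\<rho> u)^2 * (\<psi> u + c)^2"
        by (simp add: k_def kk_def power_mult_distrib)
      moreover have "(1/m)^2 * (2 * (\<psi> u)^2 + 2 * c^2) = (2/m^2) * (\<psi> u)^2 + 2/m^2*c^2"
        by (simp add: power_divide algebra_simps)
      ultimately show ?thesis by simp
    qed
  qed simp
  have L2k: "L2_01 k" using kmeas k_sq by (simp add: L2_01_def)
  have H1f: "H1_0_01 f"
    unfolding H1_0_01_def H1_01_def has_weak_deriv_01_def using L2k f0 f1 by (auto simp: f_def)
  define V where "V u = f u *\<^sub>R y u" for u
  define V' where "V' u = k u *\<^sub>R y u + f u *\<^sub>R y' u" for u
  have VS: "V \<in> S_hat Y t"
    unfolding S_hat_def V_def[abs_def] y_def using H1f by blast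
  define Zb where "Zb u = indicator {0..1} u *\<^sub>R y u" for u
  define Z'b where "Z'b u = indicator {0..1} u *\<^sub>R y' u" for u
  have Zbb: "Zb \<in> borel_measurable borel"
    unfolding Zb_def[abs_def] by (rule borel_measurable_continuous_on_indicator) (simp_all add: yc)
  have Z'bb: "Z'b \<in> borel_measurable borel"
    unfolding Z'b_def[abs_def] by (rule borel_measurable_continuous_on_indicator) (simp_all add: y'c)
  have Zbc: "continuous_on {0..1} Zb" by (rule continuous_on_eq[OF yc]) (simp add: Zb_def)
  have Z'bc: "continuous_on {0..1} Z'b" by (rule continuous_on_eq[OF y'c]) (simp add: Z'b_def)
  have Zbd: "(Zb has_vector_derivative Z'b s) (at s within {0..1})" if "s \<in> {0..1}" for s
  proof -
    have "(Zb has_vector_derivative y' s) (at s within {0..1})"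
      by (rule has_vector_derivative_transform[OF that _ yd[OF that]]) (simp add: Zb_def)
    then show ?thesis using that by (simp add: Z'b_def)
  qed
  have Vint: "(V' has_integral V u) {0..u}" if "u \<in> {0..1}" for u
  proof -
    have u0: "0 \<le> u" and u1: "u \<le> 1" using that by auto
    have "((\<lambda>s. k s *\<^sub>R Zb s + integral {0..s} k *\<^sub>R Z'b s) has_integral (integral {0..u} k *\<^sub>R Zb u)) {0..u}"
      by (rule prod_rule[OF kb hi Zbb Z'bb Zbc Z'bc Zbd u0 u1])
    then have "(V' has_integral (integral {0..u} k *\<^sub>R Zb u)) {0..u}"
      by (rule has_integral_eq[rotated]) (use u1 in \<open>simp add: V'_def Zb_def Z'b_def f_def\<close>)
    then show ?thesis using that by (simp add: V_def Zb_def f_def)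
  qed
  have ymeas: "y measurable_on {0..1}"
    by (rule measurable_on_iff_borel_measurable[THEN iffD2]) (simp_all add: continuous_imp_measurable_on_sets_lebesgue[OF yc])
  have y'meas: "y' measurable_on {0..1}"
    by (rule measurable_on_iff_borel_measurable[THEN iffD2]) (simp_all add: continuous_imp_measurable_on_sets_lebesgue[OF y'c])
  have fmeas: "f measurable_on {0..1}"
    by (rule measurable_on_iff_borel_measurable[THEN iffD2]) (simp_all add: continuous_imp_measurable_on_sets_lebesgue[OF fc])
  have V'meas: "V' measurable_on {0..1}"
    unfolding V'_def[abs_def]
    by (rule measurable_on_add[OF measurable_on_scaleR[OF kmeas ymeas] measurable_on_scaleR[OF fmeas y'meas]])
  obtain By where By: "By > 0" "\<And>s. s \<in> {0..1} \<Longrightarrow> norm (y s) \<le> By"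
    using compact_continuous_image[OF yc] compact_imp_bounded bounded_pos
    by (metis compact_Icc image_eqI)
  obtain By' where By': "By' > 0" "\<And>s. s \<in> {0..1} \<Longrightarrow> norm (y' s) \<le> By'"
    using compact_continuous_image[OF y'c] compact_imp_bounded bounded_pos
    by (metis compact_Icc image_eqI)
  obtain Bf where Bf: "Bf > 0" "\<And>s. s \<in> {0..1} \<Longrightarrow> norm (f s) \<le> Bf"
    using compact_continuous_image[OF fc] compact_imp_bounded bounded_pos
    by (metis compact_Icc image_eqI)
  have V'sq: "(\<lambda>u. norm (V' u)^2) integrable_on {0..1}"
  proof (rule measurable_bounded_by_integrable_imp_integrable)
    have "V' \<in> borel_measurable (lebesgue_on {0..1})"
      using V'meas by (rule measurable_on_imp_borel_measurable_lebesgue) simp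
    then show "(\<lambda>u. norm (V' u)^2) \<in> borel_measurable (lebesgue_on {0..1})"
      by measurable
    show "(\<lambda>u. (2 * By^2) * norm (k u)^2 + 2 * (Bf * By')^2) integrable_on {0..1}"
      using integrable_add[OF integrable_on_cmult_left[OF k_sq, of "2 * By^2"] integrable_const_ivl[of "2 * (Bf * By')^2" 0 1]]
      by simp
    show "norm (norm (V' u)^2) \<le> (2 * By^2) * norm (k u)^2 + 2 * (Bf * By')^2" if "u \<in> {0..1}" for u
    proof -
      have "norm (V' u) \<le> norm (k u *\<^sub>R y u) + norm (f u *\<^sub>R y' u)"
        unfolding V'_def by (rule norm_triangle_ineq)
      also have "\<dots> = \<bar>k u\<bar> * norm (y u) + \<bar>f u\<bar> * norm (y' u)" by simp
      also have "\<dots> \<le> \<bar>k u\<bar> * By + Bf * By'"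
      proof (rule add_mono)
        show "\<bar>k u\<bar> * norm (y u) \<le> \<bar>k u\<bar> * By" using By(2)[OF that] by (simp add: mult_left_mono)
        show "\<bar>f u\<bar> * norm (y' u) \<le> Bf * By'"
          using Bf(2)[OF that] By'(2)[OF that] by (intro mult_mono) auto
      qed
      finally have "norm (V' u)^2 \<le> 2 * (\<bar>k u\<bar> * By)^2 + 2 * (Bf * By')^2"
        by (intro sq_bound) auto
      then show ?thesis by (simp add: power_mult_distrib algebra_simps)
    qed
  qed simp
  have L2V': "L2_01 V'" using V'meas V'sq by (simp add: L2_01_def)
  have wd: "has_weak_deriv_01 V V'"
    unfolding has_weak_deriv_01_def
  proof (intro conjI ballI L2V')
    fix u :: real assume "u \<in> {0..1}"
    then show "V u = V 0 + integral {0..u} V'"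
      using integral_unique[OF Vint] by (simp add: V_def f0)
  qed
  have Fr: "F_rep g Y Y' t V V' u = \<phi> u + c" if "u \<in> {0..1} - N" for u
  proof -
    have u01: "u \<in> {0..1}" using that by simp
    have "F_rep g Y Y' t V V' u = k u * g (y u) (y u) + f u * (t * g (Y' (t * u)) (y u)) - t * (f u * g (y u) (Y' (t * u)))"
      unfolding F_rep_def V_def V'_def y'_def
      by (simp add: bilinear_ladd[OF g_bilinear] bilinear_lmul[OF g_bilinear] y_def)
    also have "\<dots> = k u * q u" by (simp add: q_def g_sym[of "Y' (t * u)"] algebra_simps)
    also have "\<dots> = \<psi> u + c"
      using qneg[OF u01] u01 by (simp add: k_def kk_def \<rho>_def)
    also have "\<dots> = \<phi> u + c" using psiphi[OF that] by simp
    finally show ?thesis .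
  qed
  show ?thesis using VS wd Fr negN by blast
  qed
qed

end
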